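(* Consider a set of market participants (at least two) and a sequence of market data points $x = 1,2,3,\dots$. For each participant $i$ and data point $x$, let $D(i,x)\in\mathbb{R}$ be the real time at which $x$ is delivered to participant $i$, with $D(i,x) < D(i,x+1)$. Suppose an ordering system achieves response time fairness when trigger points are unknown, in the following sense: the ordering system receives the delivery times $D$ and the submission times $S(i,a)$ of all trades (but not their trigger points), and outputs a strict order $O$ on the trades; and for every finite collection of trades with any submission times and for every assignment of trigger points $TP(i,a)$ to these trades satisfying $D(i,TP(i,a)) \le S(i,a)$, the output order satisfies: whenever $TP(i,a) = TP(j,b) = x$ and $S(i,a) - D(i,x) < S(j,b) - D(j,x)$, then $O(i,a) < O(j,b)$. Then necessarily $$D(i,y) - D(i,x) = D(j,y) - D(j,x) \quad \text{for all participants } i,j \text{ and all data points } x,y.$$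
   Context: A trade $(i,a)$ denotes the $a$-th trade submitted by participant $i$; $S(i,a)$ is the real time at which it is submitted. The trigger point $TP(i,a)$ is the market data point in response to which the trade was generated, and the response time is $RT(i,a) = S(i,a) - D(i,TP(i,a))$. Response time fairness (for trades in the same speed race) requires: if $TP(i,a)=TP(j,b)$ and $RT(i,a) < RT(j,b)$ then $O(i,a) < O(j,b)$, where $O(i,a)<O(j,b)$ means trade $(i,a)$ is forwarded to the exchange's matching engine before $(j,b)$. "Trigger points unknown" means the ordering can depend only on the delivery times and submission times, so it must satisfy the fairness condition simultaneously for every possible assignment of trigger points consistent with these times. *)

theory Defs
  imports Main "HOL.Real"
begin

text \<open>Trades are pairs (i, a): the a-th trade of participant i.
  Data points are natural numbers x \<ge> 1.
  An ordering system (for the fixed delivery times D) maps a finite set of trades T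
  together with their submission times S to a relation Ord T S on trades
  (Ord T S t u means t is forwarded before u).\<close>

definition strict_order_on :: "'a set \<Rightarrow> ('a \<Rightarrow> 'a \<Rightarrow> bool) \<Rightarrow> bool" where
  "strict_order_on T R \<longleftrightarrow>
     (\<forall>t\<in>T. \<not> R t t) \<and> (\<forall>t\<in>T. \<forall>u\<in>T. \<forall>v\<in>T. R t u \<and> R u v \<longrightarrow> R t v)"

definition rt_fair_unknown_TP ::
  "('p \<Rightarrow> nat \<Rightarrow> real) \<Rightarrow>
   (('p \<times> nat) set \<Rightarrow> ('p \<times> nat \<Rightarrow> real) \<Rightarrow> 'p \<times> nat \<Rightarrow> 'p \<times> nat \<Rightarrow> bool) \<Rightarrow> bool" where
  "rt_fair_unknown_TP D Ord \<longleftrightarrow>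
     (\<forall>T S. finite T \<longrightarrow>
        strict_order_on T (Ord T S) \<and>
        (\<forall>TP. (\<forall>t\<in>T. 1 \<le> TP t \<and> D (fst t) (TP t) \<le> S t) \<longrightarrow>
           (\<forall>t\<in>T. \<forall>u\<in>T. TP t = TP u \<and>
               S t - D (fst t) (TP t) < S u - D (fst u) (TP u) \<longrightarrow> Ord T S t u)))"

end

theory Submission
  imports Defs
begin

lemma helper:
  fixes D :: "'p \<Rightarrow> nat \<Rightarrow> real"
    and Ord :: "('p \<times> nat) set \<Rightarrow> ('p \<times> nat \<Rightarrow> real) \<Rightarrow> 'p \<times> nat \<Rightarrow> 'p \<times> nat \<Rightarrow> bool"
  assumes F: "rt_fair_unknown_TP D Ord" and ij: "i \<noteq> j" and x: "1 \<le> x" and y: "1 \<le> y"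
  shows "\<not> (D i y - D j y < D i x - D j x)"
proof
  assume lt: "D i y - D j y < D i x - D j x"
  define t where "t = (i, 0::nat)"
  define u where "u = (j, 0::nat)"
  define T where "T = {t, u}"
  define c where "c = ((D i y - D j y) + (D i x - D j x)) / 2"
  define M where "M = \<bar>D i x\<bar> + \<bar>D i y\<bar> + \<bar>D j x\<bar> + \<bar>D j y\<bar> + \<bar>c\<bar>"
  define S where "S = (\<lambda>s. if s = t then M + c else M)"
  have tu: "t \<noteq> u" using ij by (simp add: t_def u_def)
  have fin: "finite T" by (simp add: T_def)
  have H: "strict_order_on T (Ord T S) \<and>
        (\<forall>TP. (\<forall>s\<in>T. 1 \<le> TP s \<and> D (fst s) (TP s) \<le> S s) \<longrightarrow>
           (\<forall>s\<in>T. \<forall>v\<in>T. TP s = TP v \<and>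
               S s - D (fst s) (TP s) < S v - D (fst v) (TP v) \<longrightarrow> Ord T S s v))"
    using F fin unfolding rt_fair_unknown_TP_def by blast
  have St: "S t = M + c" and Su: "S u = M" using tu by (auto simp: S_def)
  have ab: "D i x \<le> \<bar>D i x\<bar>" "D i y \<le> \<bar>D i y\<bar>" "D j x \<le> \<bar>D j x\<bar>" "D j y \<le> \<bar>D j y\<bar>"
    "0 \<le> \<bar>D i x\<bar>" "0 \<le> \<bar>D i y\<bar>" "0 \<le> \<bar>D j x\<bar>" "0 \<le> \<bar>D j y\<bar>" "- c \<le> \<bar>c\<bar>" by auto
  have m: "D i x \<le> M + c" "D j x \<le> M" "D i y \<le> M + c" "D j y \<le> M"
    unfolding M_def using ab by linarith+
  have v1: "\<forall>s\<in>T. 1 \<le> (\<lambda>_. x) s \<and> D (fst s) ((\<lambda>_. x) s) \<le> S s"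
    using x St Su using m by (auto simp: T_def t_def u_def)
  have v2: "\<forall>s\<in>T. 1 \<le> (\<lambda>_. y) s \<and> D (fst s) ((\<lambda>_. y) s) \<le> S s"
    using y St Su using m by (auto simp: T_def t_def u_def)
  have tT: "t \<in> T" and uT: "u \<in> T" by (auto simp: T_def)
  have o1: "Ord T S t u"
  proof -
    have "S t - D (fst t) x < S u - D (fst u) x"
      using St Su lt by (simp add: t_def u_def c_def field_simps)
    then show ?thesis using mp[OF spec[OF conjunct2[OF H], of "\<lambda>_. x"] v1] tT uT by simp
  qed
  have o2: "Ord T S u t"
  proof -
    have "S u - D (fst u) y < S t - D (fst t) y"
      using St Su lt by (simp add: t_def u_def c_def field_simps)
    then show ?thesis using mp[OF spec[OF conjunct2[OF H], of "\<lambda>_. y"] v2] tT uT by simp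
  qed
  show False using H o1 o2 tT uT unfolding strict_order_on_def by blast
qed

theorem lemma1:
  fixes D :: "'p \<Rightarrow> nat \<Rightarrow> real"
    and Ord :: "('p \<times> nat) set \<Rightarrow> ('p \<times> nat \<Rightarrow> real) \<Rightarrow> 'p \<times> nat \<Rightarrow> 'p \<times> nat \<Rightarrow> bool"
  assumes "\<exists>i j :: 'p. i \<noteq> j"
    and "\<forall>i x. 1 \<le> x \<longrightarrow> D i x < D i (Suc x)"
    and "rt_fair_unknown_TP D Ord"
  shows "\<forall>i j x y. 1 \<le> x \<longrightarrow> 1 \<le> y \<longrightarrow> D i y - D i x = D j y - D j x"
proof (intro allI impI)
  fix i j :: 'p and x y :: nat
  assume x: "1 \<le> x" and y: "1 \<le> y"
  show "D i y - D i x = D j y - D j x"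
  proof (cases "i = j")
    case False
    have "\<not> (D i y - D j y < D i x - D j x)"
      using helper[OF assms(3) False x y] .
    moreover have "\<not> (D j y - D i y < D j x - D i x)"
      using helper[OF assms(3)] False x y by metis
    ultimately show ?thesis by linarith
  qed simp
qed

end
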